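(* Let $A$ be a unital $C^*$-algebra, let $P\in M_M(A)$ be a submagic matrix, let $K\ge0$ and $N=M+K$. If $P$ can be completed to a magic matrix $\widetilde P\in M_N(A)$ (i.e. one whose upper-left $M\times M$ block is $P$), then $\sum_{i,j=1}^M P_{ij}\ge (M-K)1$.
   Context: A submagic matrix over $A$ is a square matrix whose entries are orthogonal projections, pairwise orthogonal within each row and within each column; it is magic if moreover the entries in each row and each column sum to $1$. The inequality is in the order of self-adjoint elements of $A$. *)

theory Defs
  imports Complex_Main
begin

text \<open>Unital C*-algebras: a complex Banach algebra with unit, an involution and the C*-identity.
  The complex scalar multiplication is an extra operation compatible with the real one.\<close>

class cstar_algebra = real_normed_algebra_1 + banach +
  fixes cscale :: "complex \<Rightarrow> 'a \<Rightarrow> 'a"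
    and cstar :: "'a \<Rightarrow> 'a"
  assumes cscale_add_right: "cscale c (x + y) = cscale c x + cscale c y"
    and cscale_add_left: "cscale (c + d) x = cscale c x + cscale d x"
    and cscale_cscale: "cscale c (cscale d x) = cscale (c * d) x"
    and cscale_one: "cscale 1 x = x"
    and cscale_of_real: "cscale (complex_of_real r) x = scaleR r x"
    and cscale_mult_left: "cscale c (x * y) = cscale c x * y"
    and cscale_mult_right: "cscale c (x * y) = x * cscale c y"
    and norm_cscale: "norm (cscale c x) = cmod c * norm x"
    and cstar_cstar: "cstar (cstar x) = x"
    and cstar_add: "cstar (x + y) = cstar x + cstar y"
    and cstar_cscale: "cstar (cscale c x) = cscale (cnj c) (cstar x)"
    and cstar_mult: "cstar (x * y) = cstar y * cstar x"
    and cstar_identity: "norm (cstar x * x) = norm x * norm x"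

definition cstar_positive :: "'a::cstar_algebra \<Rightarrow> bool" where
  "cstar_positive x \<longleftrightarrow> (\<exists>c. x = cstar c * c)"

definition cstar_le :: "'a::cstar_algebra \<Rightarrow> 'a \<Rightarrow> bool" where
  "cstar_le a b \<longleftrightarrow> cstar a = a \<and> cstar b = b \<and> cstar_positive (b - a)"

definition is_projection :: "'a::cstar_algebra \<Rightarrow> bool" where
  "is_projection p \<longleftrightarrow> cstar p = p \<and> p * p = p"

text \<open>Square matrices of size n, represented as functions on indices < n.\<close>
definition submagic :: "nat \<Rightarrow> (nat \<Rightarrow> nat \<Rightarrow> 'a::cstar_algebra) \<Rightarrow> bool" where
  "submagic n P \<longleftrightarrow>
     (\<forall>i<n. \<forall>j<n. is_projection (P i j)) \<and>
     (\<forall>i<n. \<forall>j<n. \<forall>k<n. j \<noteq> k \<longrightarrow> P i j * P i k = 0) \<and>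
     (\<forall>j<n. \<forall>i<n. \<forall>k<n. i \<noteq> k \<longrightarrow> P i j * P k j = 0)"

definition magic :: "nat \<Rightarrow> (nat \<Rightarrow> nat \<Rightarrow> 'a::cstar_algebra) \<Rightarrow> bool" where
  "magic n P \<longleftrightarrow> submagic n P \<and>
     (\<forall>i<n. (\<Sum>j<n. P i j) = 1) \<and> (\<forall>j<n. (\<Sum>i<n. P i j) = 1)"

end

theory Submission imports Defs begin
function sqa :: "nat \<Rightarrow> real" where
  "sqa n = (if n = 0 then 0 else if n = 1 then 1/2 else (\<Sum>k\<in>{1..<n}. sqa k * sqa (n-k)) / 2)"
  by auto
termination by (relation "measure id") auto
declare sqa.simps[simp del]
lemma sqa_0[simp]: "sqa 0 = 0" by (simp add: sqa.simps)
lemma sqa_1[simp]: "sqa (Suc 0) = 1/2" by (simp add: sqa.simps)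

lemma sqa_nonneg: "sqa n \<ge> 0"
proof (induction n rule: less_induct)
  case (less n)
  show ?case
    by (subst sqa.simps) (auto intro!: sum_nonneg mult_nonneg_nonneg less)
qed

lemma sqa_conv: "n \<ge> 2 \<Longrightarrow> (\<Sum>k\<in>{Suc 0..<n}. sqa k * sqa (n-k)) = 2 * sqa n"
  by (subst (2) sqa.simps) auto

lemma sqa_bound: "(\<Sum>n\<le>N. sqa n) \<le> 1"
proof (induction N)
  case 0 then show ?case by (simp add: sqa.simps)
next
  case (Suc N)
  define A where "A = (\<Sum>n\<le>N. sqa n)"
  have A0: "A \<ge> 0" unfolding A_def by (simp add: sum_nonneg sqa_nonneg)
  have "2 * (\<Sum>n\<le>Suc N. sqa n) = 2 * sqa 1 + (\<Sum>n\<in>{2..Suc N}. 2 * sqa n)"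
  proof -
    have "{..Suc N} = {0,1} \<union> {2..Suc N}" by auto
    then show ?thesis by (simp add: sum.union_disjoint sum_distrib_left sqa.simps[of 0])
  qed
  also have "(\<Sum>n\<in>{2..Suc N}. 2 * sqa n) = (\<Sum>n\<in>{2..Suc N}. \<Sum>k\<in>{1..<n}. sqa k * sqa (n-k))"
    by (rule sum.cong) (auto simp: sqa_conv)
  also have "\<dots> = (\<Sum>(n,k)\<in>(SIGMA n:{2..Suc N}. {1..<n}). sqa k * sqa (n-k))"
    by (rule sum.Sigma) auto
  also have "\<dots> = (\<Sum>(k,m)\<in>(\<lambda>(n,k). (k, n-k)) ` (SIGMA n:{2..Suc N}. {1..<n}). sqa k * sqa m)"
    by (subst sum.reindex) (auto simp: inj_on_def intro!: sum.cong)
  also have "\<dots> \<le> (\<Sum>(k,m)\<in>{..N} \<times> {..N}. sqa k * sqa m)"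
    by (rule sum_mono2) (auto simp: sqa_nonneg)
  also have "\<dots> = A * A"
    by (simp add: A_def sum_product sum.cartesian_product)
  finally have "2 * (\<Sum>n\<le>Suc N. sqa n) \<le> 1 + A * A" by simp
  moreover have "A * A \<le> 1" using Suc.IH A0 unfolding A_def[symmetric]
    by (metis mult_le_one)
  ultimately show ?case by simp
qed

definition sqc :: "nat \<Rightarrow> real" where "sqc n = (if n = 0 then 1 else - sqa n)"

lemma summable_sqa: "summable sqa"
proof (rule summableI_nonneg_bounded[where x=1])
  fix n
  show "(\<Sum>i<n. sqa i) \<le> 1"
  proof (cases n)
    case 0 then show ?thesis by simp
  next
    case (Suc m) then show ?thesis using sqa_bound[of m] by (simp add: lessThan_Suc_atMost)
  qed
qed (rule sqa_nonneg)

lemma summable_abs_sqc: "summable (\<lambda>n. \<bar>sqc n\<bar>)"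
proof -
  have "summable (\<lambda>n. \<bar>sqc (Suc n)\<bar>)"
    using summable_sqa[THEN summable_Suc_iff[THEN iffD2]] by (simp add: sqc_def sqa_nonneg)
  then show ?thesis by (simp add: summable_Suc_iff[symmetric, of "\<lambda>n. \<bar>sqc n\<bar>"])
qed

lemma sqc_conv: "(\<Sum>k\<le>n. sqc k * sqc (n-k)) = (if n = 0 then 1 else if n = 1 then -1 else 0)"
proof -
  consider "n = 0" | "n = 1" | "n \<ge> 2" by linarith
  then show ?thesis
  proof cases
    case 1 then show ?thesis by (simp add: sqc_def)
  next
    case 2 then show ?thesis by (simp add: sqc_def)
  next
    case 3
    have "{..n} = {0, n} \<union> {Suc 0..<n}" using 3 by auto
    then have "(\<Sum>k\<le>n. sqc k * sqc (n-k)) = sqc 0 * sqc n + sqc n * sqc 0 + (\<Sum>k\<in>{Suc 0..<n}. sqc k * sqc (n-k))"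
      using 3 by (simp add: sum.union_disjoint)
    also have "(\<Sum>k\<in>{Suc 0..<n}. sqc k * sqc (n-k)) = (\<Sum>k\<in>{Suc 0..<n}. sqa k * sqa (n-k))"
      by (rule sum.cong) (auto simp: sqc_def)
    also have "\<dots> = 2 * sqa n" using 3 by (rule sqa_conv)
    finally show ?thesis using 3 by (simp add: sqc_def)
  qed
qed

lemma cstar_zero[simp]: "cstar (0::'a::cstar_algebra) = 0"
  by (metis add_cancel_right_right cstar_add)

lemma cstar_scaleR[simp]: "cstar (r *\<^sub>R (x::'a::cstar_algebra)) = r *\<^sub>R cstar x"
  by (metis cstar_cscale cscale_of_real complex_cnj_complex_of_real)

lemma cstar_one[simp]: "cstar (1::'a::cstar_algebra) = 1"
  by (metis cstar_cstar cstar_mult mult_1_left mult_1_right)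

lemma cstar_minus[simp]: "cstar (- (x::'a::cstar_algebra)) = - cstar x"
  by (metis add_eq_0_iff cstar_add cstar_zero neg_eq_iff_add_eq_0)

lemma cstar_diff[simp]: "cstar ((x::'a::cstar_algebra) - y) = cstar x - cstar y"
  by (metis cstar_add cstar_minus diff_conv_add_uminus)

lemma cstar_sum: "cstar (\<Sum>i\<in>A. f i :: 'a::cstar_algebra) = (\<Sum>i\<in>A. cstar (f i))"
  by (induction A rule: infinite_finite_induct) (auto simp: cstar_add)

lemma cstar_of_nat[simp]: "cstar (of_nat n :: 'a::cstar_algebra) = of_nat n"
  by (induction n) (auto simp: cstar_add)

lemma cstar_power: "cstar ((x::'a::cstar_algebra) ^ n) = cstar x ^ n"
  by (induction n) (auto simp: cstar_mult power_commutes)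

lemma norm_cstar_le: "norm (cstar (x::'a::cstar_algebra)) \<ge> norm x"
proof (cases "x = 0")
  case False
  have "norm x * norm x = norm (cstar x * x)" by (simp add: cstar_identity)
  also have "\<dots> \<le> norm (cstar x) * norm x" by (rule norm_mult_ineq)
  finally show ?thesis using False by simp
qed simp

lemma norm_cstar[simp]: "norm (cstar (x::'a::cstar_algebra)) = norm x"
  using norm_cstar_le[of x] norm_cstar_le[of "cstar x"] by (simp add: cstar_cstar)

lemma bounded_linear_cstar: "bounded_linear (cstar :: 'a::cstar_algebra \<Rightarrow> 'a)"
  by (rule bounded_linear_intro[where K=1]) (auto simp: cstar_add)

lemma sqrt_exists:
  fixes x :: "'a::cstar_algebra"
  assumes sa: "cstar x = x" and nx: "norm x \<le> 1"
  shows "\<exists>s. cstar s = s \<and> s * s = 1 - x"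
proof -
  define f where "f n = sqc n *\<^sub>R x ^ n" for n
  have nf: "summable (\<lambda>n. norm (f n))"
  proof (rule summable_comparison_test[OF _ summable_abs_sqc])
    show "\<exists>N. \<forall>n\<ge>N. norm (norm (f n)) \<le> \<bar>sqc n\<bar>"
    proof (intro exI allI impI)
      fix n
      have "norm (x ^ n) \<le> 1"
        using norm_power_ineq[of x n] power_le_one[OF norm_ge_zero nx, of n] by linarith
      then show "norm (norm (f n)) \<le> \<bar>sqc n\<bar>"
        unfolding f_def by (simp add: mult_left_le)
    qed
  qed
  then have sf: "summable f" by (rule summable_norm_cancel)
  define s where "s = suminf f"
  have "cstar s = (\<Sum>n. cstar (f n))"
    unfolding s_def using bounded_linear.suminf[OF bounded_linear_cstar sf] .
  also have "\<dots> = s" unfolding s_def f_def by (simp add: cstar_power sa)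
  finally have 1: "cstar s = s" .
  have "s * s = (\<Sum>n. \<Sum>k\<le>n. f k * f (n - k))"
    unfolding s_def by (rule Cauchy_product[OF nf nf])
  also have "\<dots> = (\<Sum>n. (\<Sum>k\<le>n. sqc k * sqc (n-k)) *\<^sub>R x ^ n)"
  proof -
    have "f k * f (n - k) = (sqc k * sqc (n-k)) *\<^sub>R x ^ n" if "k \<le> n" for k n
      using that unfolding f_def by (simp add: power_add[symmetric])
    then show ?thesis by (simp add: scaleR_sum_left)
  qed
  also have "\<dots> = (\<Sum>n. (if n = 0 then 1 else if n = 1 then -1 else 0) *\<^sub>R x ^ n)"
    by (simp only: sqc_conv)
  also have "\<dots> = (\<Sum>n\<in>{0,1}. (if n = 0 then 1 else if n = 1 then -1 else 0) *\<^sub>R x ^ n)"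
    by (rule suminf_finite) auto
  also have "\<dots> = 1 - x" by simp
  finally show ?thesis using 1 by blast
qed


lemma norm_reflection:
  fixes p :: "'a::cstar_algebra"
  assumes "is_projection p"
  shows "norm (1 - 2 *\<^sub>R p) \<le> 1"
proof -
  have sp: "cstar p = p" and pp: "p * p = p" using assms by (auto simp: is_projection_def)
  define u where "u = 1 - 2 *\<^sub>R p"
  have cu: "cstar u = u" unfolding u_def by (simp add: sp)
  have "u * u = 1"
    unfolding u_def by (simp add: algebra_simps pp scaleR_2)
  then have "cstar u * u = 1" by (simp add: cu)
  then have "norm u * norm u = 1" by (metis cstar_identity norm_one)
  then have "norm u = 1"
    by (metis abs_norm_cancel abs_of_nonneg norm_ge_zero real_sqrt_abs2 real_sqrt_one power2_eq_square)
  then show ?thesis unfolding u_def by simp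
qed

theorem proposition3p3:
  fixes P :: "nat \<Rightarrow> nat \<Rightarrow> 'a::cstar_algebra" and M K :: nat
  assumes "submagic M P"
    and "\<exists>Q. magic (M + K) Q \<and> (\<forall>i<M. \<forall>j<M. Q i j = P i j)"
  shows "cstar_le (of_int (int M - int K)) (\<Sum>i<M. \<Sum>j<M. P i j)"
proof -
  obtain Q where mQ: "magic (M + K) Q" and QP: "\<forall>i<M. \<forall>j<M. Q i j = P i j"
    using assms(2) by blast
  define N where "N = M + K"
  define J where "J = {M..<N}"
  have proj: "is_projection (Q i j)" if "i < N" "j < N" for i j
    using mQ that by (auto simp: magic_def submagic_def N_def)
  have orth: "Q i j * Q i k = 0" if "i < N" "j < N" "k < N" "j \<noteq> k" for i j k
    using mQ that unfolding magic_def submagic_def N_def by blast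
  have row: "(\<Sum>j<N. Q i j) = 1" if "i < N" for i
    using mQ that by (auto simp: magic_def N_def)
  have col: "(\<Sum>i<N. Q i j) = 1" if "j < N" for j
    using mQ that by (auto simp: magic_def N_def)
  have split: "{..<N} = {..<M} \<union> J" "{..<M} \<inter> J = {}" unfolding J_def N_def by auto
  have row2: "(\<Sum>j<M. Q i j) = 1 - (\<Sum>j\<in>J. Q i j)" if "i < N" for i
    using row[OF that] split by (simp add: sum.union_disjoint J_def eq_diff_eq)
  have col2: "(\<Sum>i<M. Q i j) = 1 - (\<Sum>i\<in>J. Q i j)" if "j < N" for j
    using col[OF that] split by (simp add: sum.union_disjoint J_def eq_diff_eq)
  define S where "S = (\<Sum>i<M. \<Sum>j<M. P i j)"
  define T where "T = (\<Sum>i\<in>J. \<Sum>j\<in>J. Q i j)"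
  have cardJ: "card J = K" unfolding J_def N_def by simp
  have "S = (\<Sum>i<M. \<Sum>j<M. Q i j)" unfolding S_def using QP by simp
  also have "\<dots> = (\<Sum>i<M. 1 - (\<Sum>j\<in>J. Q i j))"
    by (rule sum.cong) (auto simp: row2 N_def)
  also have "\<dots> = of_nat M - (\<Sum>i<M. \<Sum>j\<in>J. Q i j)"
    by (simp add: sum_subtractf)
  also have "(\<Sum>i<M. \<Sum>j\<in>J. Q i j) = (\<Sum>j\<in>J. \<Sum>i<M. Q i j)"
    by (rule sum.swap)
  also have "(\<Sum>j\<in>J. \<Sum>i<M. Q i j) = (\<Sum>j\<in>J. 1 - (\<Sum>i\<in>J. Q i j))"
    by (rule sum.cong) (auto simp: col2 J_def)
  also have "\<dots> = of_nat K - (\<Sum>j\<in>J. \<Sum>i\<in>J. Q i j)"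
    by (simp add: sum_subtractf cardJ)
  also have "(\<Sum>j\<in>J. \<Sum>i\<in>J. Q i j) = T"
    unfolding T_def by (rule sum.swap)
  finally have ST: "S = of_nat M - of_nat K + T" by simp
  have cS: "cstar S = S"
    unfolding S_def using assms(1)
    by (auto simp: cstar_sum submagic_def is_projection_def intro!: sum.cong)
  define p where "p i = (\<Sum>j\<in>J. Q i j)" for i
  have pproj: "is_projection (p i)" if "i \<in> J" for i
  proof -
    have iN: "i < N" using that J_def by auto
    have "cstar (p i) = p i" unfolding p_def using proj iN
      by (auto simp: cstar_sum is_projection_def J_def intro!: sum.cong)
    moreover have "p i * p i = p i"
    proof -
      have "p i * p i = (\<Sum>j\<in>J. \<Sum>k\<in>J. Q i j * Q i k)"
        unfolding p_def by (rule sum_product)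
      also have "\<dots> = (\<Sum>j\<in>J. Q i j * Q i j)"
      proof (rule sum.cong[OF refl])
        fix j assume j: "j \<in> J"
        have "(\<Sum>k\<in>J. Q i j * Q i k) = Q i j * Q i j + (\<Sum>k\<in>J - {j}. Q i j * Q i k)"
          using j by (subst sum.remove[of J j]) (auto simp: J_def)
        also have "(\<Sum>k\<in>J - {j}. Q i j * Q i k) = 0"
          by (rule sum.neutral) (use j iN orth in \<open>auto simp: J_def\<close>)
        finally show "(\<Sum>k\<in>J. Q i j * Q i k) = Q i j * Q i j" by simp
      qed
      also have "\<dots> = p i" unfolding p_def using proj iN
        by (auto simp: is_projection_def J_def intro!: sum.cong)
      finally show ?thesis .
    qed
    ultimately show ?thesis by (simp add: is_projection_def)
  qed
  have Tp: "T = (\<Sum>i\<in>J. p i)" unfolding T_def p_def ..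
  have posT: "cstar_positive T"
  proof (cases "K = 0")
    case True
    then have "T = 0" unfolding T_def J_def N_def by simp
    then show ?thesis unfolding cstar_positive_def by (intro exI[of _ 0]) simp
  next
    case False
    then have Kpos: "real K > 0" by simp
    define x where "x = (1 / real K) *\<^sub>R (\<Sum>i\<in>J. 1 - 2 *\<^sub>R p i)"
    have cx: "cstar x = x" unfolding x_def using pproj
      by (auto simp: cstar_sum is_projection_def intro!: sum.cong)
    have "norm (\<Sum>i\<in>J. 1 - 2 *\<^sub>R p i) \<le> (\<Sum>i\<in>J. norm (1 - 2 *\<^sub>R p i))"
      by (rule norm_sum)
    also have "\<dots> \<le> (\<Sum>i\<in>J. 1)" by (rule sum_mono) (use norm_reflection pproj in auto)
    also have "\<dots> = real K" using cardJ by simp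
    finally have "norm x \<le> 1" unfolding x_def using Kpos by (simp add: field_simps)
    then obtain s where cs: "cstar s = s" and ss: "s * s = 1 - x"
      using sqrt_exists cx by blast
    have "1 - x = (2 / real K) *\<^sub>R T"
    proof -
      have "(\<Sum>i\<in>J. 1 - 2 *\<^sub>R p i) = real K *\<^sub>R 1 - 2 *\<^sub>R T"
        using cardJ by (simp add: Tp sum_subtractf scaleR_sum_right) (metis of_real_def of_real_of_nat_eq)
      then have "x = (1 / real K) *\<^sub>R (real K *\<^sub>R 1) - (1 / real K) *\<^sub>R (2 *\<^sub>R T)"
        unfolding x_def by (simp only: scaleR_diff_right)
      then have "x = 1 - (2 / real K) *\<^sub>R T" using Kpos by simp
      then show ?thesis by simp
    qed
    then have "T = (real K / 2) *\<^sub>R (s * s)" using Kpos by (simp add: ss)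
    also have "\<dots> = cstar (sqrt (real K / 2) *\<^sub>R s) * (sqrt (real K / 2) *\<^sub>R s)"
      using Kpos by (simp add: cs)
    finally show ?thesis unfolding cstar_positive_def by blast
  qed
  show ?thesis
    unfolding cstar_le_def S_def[symmetric]
    using cS posT ST by (simp add: of_int_diff cstar_add)
qed

end
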